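(* Let $x_0\in X$ be a regular point and let $u\ge0$ be a $p$-harmonic function on $\mathcal T(x_0)$. Then there exists a measure $\nu$ on $\Omega_{x_0}$ such that $$u(x)=\frac{1}{W(x)W(r(x))\cdots W(r^{n(x)-1}(x))}\,\nu\big(V_{r^{n(x)}(x),r^{n(x)-1}(x),\dots,x}\big),\qquad x\in\mathcal T(x_0).$$
   Context: $X$ is a compact metric space, $r:X\to X$ a finite-to-one, onto, Borel map, $m_0$ a Borel function with $\frac{1}{\#r^{-1}(x)}\sum_{r(y)=x}|m_0(y)|^2=1$, and $W(x)=|m_0(x)|^2/\#r^{-1}(r(x))$. A point $x_0$ is regular if the sets $r^{-n}(x_0)$, $n\in\mathbb N$, are mutually disjoint and no $r^{-n}(x_0)$, $n\ge0$, meets the zero set of $W$. $\mathcal T(x_0)=\bigcup_{n\ge0}r^{-n}(x_0)$; for $x\in\mathcal T(x_0)$, $n(x)$ is the unique $n\ge0$ with $r^n(x)=x_0$. A function $u$ on $\mathcal T(x_0)$ is $p$-harmonic if $u(x)=\sum_{r(y)=x}W(y)u(y)$ for all $x\in\mathcal T(x_0)$. $\Omega_{x_0}=\{(x_0,x_1,\dots):r(x_{n+1})=x_n\ \forall n\ge0\}$, with the product topology generated by the cylinders $V_{x_0,\dots,x_n}=\{(z_k)\in\Omega_{x_0}:z_0=x_0,\dots,z_n=x_n\}$; measures on $\Omega_{x_0}$ are Borel measures for this topology. *)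

theory Defs
  imports "HOL-Analysis.Analysis"
begin

definition preim :: "'a set \<Rightarrow> ('a \<Rightarrow> 'a) \<Rightarrow> 'a \<Rightarrow> 'a set" where
  "preim X r x = {y \<in> X. r y = x}"

definition preim_n :: "'a set \<Rightarrow> ('a \<Rightarrow> 'a) \<Rightarrow> nat \<Rightarrow> 'a \<Rightarrow> 'a set" where
  "preim_n X r n x = {y \<in> X. (r ^^ n) y = x}"

definition standing :: "'a::metric_space set \<Rightarrow> ('a \<Rightarrow> 'a) \<Rightarrow> ('a \<Rightarrow> complex) \<Rightarrow> bool" where
  "standing X r m0 \<longleftrightarrow>
     compact X \<and> r ` X = X \<and> (\<forall>x\<in>X. finite (preim X r x)) \<and>
     r \<in> borel_measurable (restrict_space borel X) \<and>
     m0 \<in> borel_measurable (restrict_space borel X) \<and>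
     (\<forall>x\<in>X. (1 / real (card (preim X r x))) * (\<Sum>y\<in>preim X r x. (cmod (m0 y))\<^sup>2) = 1)"

definition Wfun :: "'a set \<Rightarrow> ('a \<Rightarrow> 'a) \<Rightarrow> ('a \<Rightarrow> complex) \<Rightarrow> 'a \<Rightarrow> real" where
  "Wfun X r m0 x = (cmod (m0 x))\<^sup>2 / real (card (preim X r (r x)))"

definition regular_point :: "'a set \<Rightarrow> ('a \<Rightarrow> 'a) \<Rightarrow> ('a \<Rightarrow> complex) \<Rightarrow> 'a \<Rightarrow> bool" where
  "regular_point X r m0 x0 \<longleftrightarrow> x0 \<in> X \<and>
     (\<forall>n m. 1 \<le> n \<longrightarrow> 1 \<le> m \<longrightarrow> n \<noteq> m \<longrightarrow> preim_n X r n x0 \<inter> preim_n X r m x0 = {}) \<and>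
     (\<forall>n. preim_n X r n x0 \<inter> {x \<in> X. Wfun X r m0 x = 0} = {})"

definition tree :: "'a set \<Rightarrow> ('a \<Rightarrow> 'a) \<Rightarrow> 'a \<Rightarrow> 'a set" where
  "tree X r x0 = (\<Union>n. preim_n X r n x0)"

definition level :: "('a \<Rightarrow> 'a) \<Rightarrow> 'a \<Rightarrow> 'a \<Rightarrow> nat" where
  "level r x0 x = (THE n. (r ^^ n) x = x0)"

definition p_harmonic :: "'a set \<Rightarrow> ('a \<Rightarrow> 'a) \<Rightarrow> ('a \<Rightarrow> complex) \<Rightarrow> 'a \<Rightarrow> ('a \<Rightarrow> real) \<Rightarrow> bool" where
  "p_harmonic X r m0 x0 u \<longleftrightarrow>
     (\<forall>x\<in>tree X r x0. u x = (\<Sum>y\<in>preim X r x. Wfun X r m0 y * u y))"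

definition Omega :: "'a set \<Rightarrow> ('a \<Rightarrow> 'a) \<Rightarrow> 'a \<Rightarrow> (nat \<Rightarrow> 'a) set" where
  "Omega X r x0 = {z. z 0 = x0 \<and> (\<forall>n. z n \<in> X \<and> r (z (Suc n)) = z n)}"

definition cyl :: "'a set \<Rightarrow> ('a \<Rightarrow> 'a) \<Rightarrow> 'a \<Rightarrow> 'a list \<Rightarrow> (nat \<Rightarrow> 'a) set" where
  "cyl X r x0 xs = {z \<in> Omega X r x0. \<forall>k<length xs. z k = xs ! k}"

end

theory Submission
  imports Defs "HOL-Probability.Probability"
begin

locale thctx =
  fixes X :: "'a::metric_space set" and r :: "'a \<Rightarrow> 'a" and m0 :: "'a \<Rightarrow> complex"
    and x0 :: 'a and u :: "'a \<Rightarrow> real"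
  assumes st: "standing X r m0"
    and reg: "regular_point X r m0 x0"
    and unn: "\<forall>x\<in>tree X r x0. u x \<ge> 0"
    and harm: "p_harmonic X r m0 x0 u"
begin

abbreviation "T \<equiv> tree X r x0"
abbreviation "W \<equiv> Wfun X r m0"
abbreviation "pre \<equiv> preim X r"
abbreviation "pn n \<equiv> preim_n X r n x0"
abbreviation "lev \<equiv> level r x0"

lemma x0X: "x0 \<in> X" using reg by (simp add: regular_point_def)

lemma rX: "x \<in> X \<Longrightarrow> r x \<in> X"
  using st unfolding standing_def by blast

lemma pre_fin: "x \<in> X \<Longrightarrow> finite (pre x)"
  using st unfolding standing_def by blast

lemma pre_ne: "x \<in> X \<Longrightarrow> pre x \<noteq> {}"
proof -
  assume "x \<in> X"
  then have "x \<in> r ` X" using st unfolding standing_def by simp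
  then show ?thesis by (auto simp: preim_def)
qed

lemma pn_Suc: "y \<in> pn (Suc n) \<longleftrightarrow> y \<in> X \<and> r y \<in> pn n"
  unfolding preim_n_def funpow_Suc_right comp_def by (auto simp del: funpow.simps intro: rX)

lemma pn_Suc_eq: "pn (Suc n) = (\<Union>z\<in>pn n. pre z)"
  using pn_Suc by (auto simp: preim_def)

lemma pn_fin: "finite (pn n)"
proof (induction n)
  case 0
  have "pn 0 \<subseteq> {x0}" by (auto simp: preim_n_def)
  then show ?case using finite_subset by blast
next
  case (Suc n)
  have "\<forall>z\<in>pn n. finite (pre z)" by (auto simp: preim_n_def intro: pre_fin)
  then show ?case using Suc by (simp add: pn_Suc_eq)
qed

lemma no_cycle: "1 \<le> n \<Longrightarrow> (r ^^ n) x0 \<noteq> x0"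
proof
  assume n: "1 \<le> n" and e: "(r ^^ n) x0 = x0"
  have "(r ^^ (n + n)) x0 = x0" by (simp add: funpow_add e)
  then have "x0 \<in> pn n \<inter> pn (n+n)" using e x0X by (auto simp: preim_n_def)
  moreover have "pn n \<inter> pn (n+n) = {}" using reg n unfolding regular_point_def by auto
  ultimately show False by blast
qed

lemma lev_eq: assumes "x \<in> pn n" shows "lev x = n"
  unfolding level_def
proof (rule the_equality)
  show "(r ^^ n) x = x0" using assms by (simp add: preim_n_def)
next
  fix m assume m: "(r ^^ m) x = x0"
  show "m = n"
  proof (rule ccontr)
    assume mn: "m \<noteq> n"
    have xX: "x \<in> X" using assms by (simp add: preim_n_def)
    show False
    proof (cases "m = 0")
      case True
      then have "x = x0" using m by simp
      then show False using no_cycle[of n] assms mn True by (auto simp: preim_n_def)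
    next
      case False
      show False
      proof (cases "n = 0")
        case True
        then have "x = x0" using assms by (simp add: preim_n_def)
        then show False using no_cycle[of m] m False by auto
      next
        case False2: False
        have "x \<in> pn m \<inter> pn n" using assms m xX by (auto simp: preim_n_def)
        moreover have "pn m \<inter> pn n = {}" using reg mn False False2 unfolding regular_point_def by auto
        ultimately show False by blast
      qed
    qed
  qed
qed

lemma T_iff: "x \<in> T \<longleftrightarrow> (\<exists>n. x \<in> pn n)" by (simp add: tree_def)

lemma T_pn: "x \<in> T \<Longrightarrow> x \<in> pn (lev x)"
  using T_iff lev_eq by metis

lemma T_X: "x \<in> T \<Longrightarrow> x \<in> X" by (auto simp: tree_def preim_n_def)

lemma child_T: assumes "x \<in> T" "y \<in> pre x" shows "y \<in> T" "lev y = Suc (lev x)"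
proof -
  have "y \<in> pn (Suc (lev x))" using assms T_pn[OF assms(1)] by (auto simp: pn_Suc preim_def)
  then show "y \<in> T" "lev y = Suc (lev x)" using T_iff lev_eq by auto
qed

lemma anc_pn: assumes "x \<in> pn n" "k \<le> n" shows "(r ^^ k) x \<in> pn (n - k)"
  using assms
proof (induction k)
  case 0 then show ?case by simp
next
  case (Suc k)
  then have h: "(r ^^ k) x \<in> pn (n - k)" by simp
  have "n - k = Suc (n - Suc k)" using Suc by simp
  with h have "(r ^^ k) x \<in> pn (Suc (n - Suc k))" by simp
  then show ?case by (simp add: pn_Suc)
qed

lemma W_nn: "W x \<ge> 0" by (simp add: Wfun_def)

lemma W_pos: "x \<in> T \<Longrightarrow> W x > 0"
proof -
  assume "x \<in> T"
  then obtain n where "x \<in> pn n" using T_iff by blast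
  moreover have "x \<in> X" using \<open>x \<in> T\<close> T_X by blast
  ultimately have "W x \<noteq> 0" using reg unfolding regular_point_def by blast
  then show ?thesis using W_nn[of x] by linarith
qed

definition PW :: "'a \<Rightarrow> real" where "PW x = (\<Prod>k<lev x. W ((r ^^ k) x))"

lemma PW_pos: assumes "x \<in> T" shows "PW x > 0"
proof -
  have "\<And>k. k < lev x \<Longrightarrow> W ((r ^^ k) x) > 0"
    using anc_pn[OF T_pn[OF assms]] T_iff W_pos by (meson less_imp_le)
  then show ?thesis unfolding PW_def by (intro prod_pos) auto
qed

lemma PW_child: assumes "x \<in> T" "y \<in> pre x" shows "PW y = W y * PW x"
proof -
  have ry: "r y = x" using assms by (simp add: preim_def)
  have "PW y = (\<Prod>k<Suc (lev x). W ((r ^^ k) y))" using child_T[OF assms] by (simp add: PW_def)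
  also have "\<dots> = W y * (\<Prod>k<lev x. W ((r ^^ Suc k) y))"
    by (subst prod.lessThan_Suc_shift) (simp del: funpow.simps)
  also have "\<dots> = W y * PW x" unfolding PW_def funpow_Suc_right comp_def ry by (simp del: funpow.simps)
  finally show ?thesis .
qed

definition c :: "'a \<Rightarrow> real" where "c x = u x * PW x"

lemma c_nn: "x \<in> T \<Longrightarrow> c x \<ge> 0"
  using unn PW_pos by (simp add: c_def less_imp_le)

lemma c_harm: assumes "x \<in> T" shows "c x = (\<Sum>y\<in>pre x. c y)"
proof -
  have "c x = PW x * (\<Sum>y\<in>pre x. W y * u y)" using harm assms
    unfolding p_harmonic_def c_def by (simp add: mult.commute)
  also have "\<dots> = (\<Sum>y\<in>pre x. c y)" unfolding sum_distrib_left
    by (intro sum.cong refl) (simp add: c_def PW_child[OF assms])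
  finally show ?thesis .
qed

lemma c_child_le: assumes "x \<in> T" "y \<in> pre x" shows "c y \<le> c x"
proof -
  have "c y \<le> (\<Sum>y\<in>pre x. c y)"
    by (rule member_le_sum) (use assms pre_fin T_X child_T c_nn in auto)
  then show ?thesis using c_harm[OF assms(1)] by simp
qed

lemma c_x0: "c x0 = u x0"
proof -
  have "x0 \<in> pn 0" using x0X by (simp add: preim_n_def)
  then have "lev x0 = 0" by (rule lev_eq)
  then show ?thesis by (simp add: c_def PW_def)
qed

definition wt :: "'a \<Rightarrow> 'a \<Rightarrow> real" where
  "wt x y = (if c x > 0 then c y / c x else 1 / real (card (pre x)))"

definition M :: "'a \<Rightarrow> 'a measure" where
  "M i = (if i \<in> T then point_measure (pre i) (\<lambda>y. ennreal (wt i y)) else count_space UNIV)"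

definition P :: "('a \<Rightarrow> 'a) measure" where "P = PiM T M"

definition F :: "('a \<Rightarrow> 'a) \<Rightarrow> nat \<Rightarrow> 'a" where "F \<omega> n = (\<omega> ^^ n) x0"

lemma wt_nn: "x \<in> T \<Longrightarrow> y \<in> pre x \<Longrightarrow> wt x y \<ge> 0"
  using c_nn child_T by (auto simp: wt_def)

lemma wt_sum: assumes "x \<in> T" shows "(\<Sum>y\<in>pre x. wt x y) = 1"
proof (cases "c x > 0")
  case True
  then have "(\<Sum>y\<in>pre x. wt x y) = (\<Sum>y\<in>pre x. c y) / c x"
    by (simp add: wt_def sum_divide_distrib)
  then show ?thesis using c_harm[OF assms] True by simp
next
  case False
  have "card (pre x) > 0" using pre_fin pre_ne T_X assms by (simp add: card_gt_0_iff)
  then show ?thesis using False by (simp add: wt_def)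
qed

lemma M_T: "i \<in> T \<Longrightarrow> M i = point_measure (pre i) (\<lambda>y. ennreal (wt i y))"
  by (simp add: M_def)

lemma M_prob: "i \<in> T \<Longrightarrow> prob_space (M i)"
  unfolding M_T
  by (rule prob_space_point_measure) (use pre_fin T_X wt_nn wt_sum in auto)

lemma space_M: "i \<in> T \<Longrightarrow> space (M i) = pre i"
  by (simp add: M_T space_point_measure)

lemma sets_M: "i \<in> T \<Longrightarrow> sets (M i) = Pow (pre i)"
  by (simp add: M_T sets_point_measure)

lemma omega_pre: "\<omega> \<in> space P \<Longrightarrow> x \<in> T \<Longrightarrow> \<omega> x \<in> pre x"
  using space_M by (auto simp: P_def space_PiM)

lemma F_Suc: "F \<omega> (Suc n) = \<omega> (F \<omega> n)" by (simp add: F_def)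

lemma F_pn: assumes "\<omega> \<in> space P" shows "F \<omega> n \<in> pn n"
proof (induction n)
  case 0 then show ?case using x0X by (simp add: F_def preim_n_def)
next
  case (Suc n)
  then have T: "F \<omega> n \<in> T" using T_iff by blast
  have "\<omega> (F \<omega> n) \<in> space (M (F \<omega> n))" using assms T
    by (auto simp: P_def space_PiM)
  then have "\<omega> (F \<omega> n) \<in> pre (F \<omega> n)" using space_M[OF T] by simp
  then show ?case using Suc by (simp add: F_Suc pn_Suc preim_def)
qed

lemma F_Omega: assumes "\<omega> \<in> space P" shows "F \<omega> \<in> Omega X r x0"
proof -
  have "F \<omega> n \<in> X" for n using F_pn[OF assms, of n] by (simp add: preim_n_def)
  moreover have "r (F \<omega> (Suc n)) = F \<omega> n" for n
  proof -
    have "F \<omega> n \<in> T" using F_pn[OF assms, of n] T_iff by blast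
    then have "\<omega> (F \<omega> n) \<in> pre (F \<omega> n)" using assms space_M
      by (auto simp: P_def space_PiM)
    then show ?thesis by (simp add: F_Suc preim_def)
  qed
  ultimately show ?thesis by (simp add: Omega_def F_def)
qed

lemma F_meas: "(\<lambda>\<omega>. F \<omega> n) \<in> measurable P (count_space (pn n))"
proof (induction n)
  case 0
  have "x0 \<in> pn 0" using x0X by (simp add: preim_n_def)
  then show ?case by (simp add: F_def)
next
  case (Suc n)
  show ?case
  proof (subst measurable_count_space_eq2[OF pn_fin], intro conjI ballI)
    show "(\<lambda>\<omega>. F \<omega> (Suc n)) \<in> space P \<rightarrow> pn (Suc n)" using F_pn by blast
  next
    fix a
    have eq: "(\<lambda>\<omega>. F \<omega> (Suc n)) -` {a} \<inter> space P =
      (\<Union>b\<in>pn n. ((\<lambda>\<omega>. F \<omega> n) -` {b} \<inter> space P) \<inter> ((\<lambda>\<omega>. \<omega> b) -` ({a} \<inter> pre b) \<inter> space P))"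
    proof -
      have "\<And>\<omega>. \<omega> \<in> space P \<Longrightarrow> \<omega> (F \<omega> n) \<in> pre (F \<omega> n)"
        using F_pn T_iff omega_pre by blast
      then show ?thesis using F_pn by (auto simp: F_Suc)
    qed
    show "(\<lambda>\<omega>. F \<omega> (Suc n)) -` {a} \<inter> space P \<in> sets P"
      unfolding eq
    proof (intro sets.finite_UN pn_fin ballI)
      fix b assume b: "b \<in> pn n"
      show "((\<lambda>\<omega>. F \<omega> n) -` {b} \<inter> space P) \<inter> ((\<lambda>\<omega>. \<omega> b) -` ({a} \<inter> pre b) \<inter> space P) \<in> sets P"
      proof (rule sets.Int)
      show "(\<lambda>\<omega>. F \<omega> n) -` {b} \<inter> space P \<in> sets P"
        using Suc b by (intro measurable_sets[of _ P "count_space (pn n)"]) auto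
      have bT: "b \<in> T" using b T_iff by blast
      have "(\<lambda>\<omega>. \<omega> b) \<in> measurable P (M b)"
        unfolding P_def by (rule measurable_component_singleton[OF bT])
      then show "(\<lambda>\<omega>. \<omega> b) -` ({a} \<inter> pre b) \<inter> space P \<in> sets P"
        by (rule measurable_sets) (auto simp: sets_M[OF bT])
    qed
    qed
  qed
qed

lemma F_eq_sets: "{\<omega> \<in> space P. F \<omega> k = a} \<in> sets P"
proof -
  have "{\<omega> \<in> space P. F \<omega> k = a} = (\<lambda>\<omega>. F \<omega> k) -` ({a} \<inter> pn k) \<inter> space P"
    using F_pn by auto
  also have "\<dots> \<in> sets P" by (rule measurable_sets[OF F_meas]) auto
  finally show ?thesis .
qed

lemma H_sets: "{\<omega> \<in> space P. \<forall>k\<in>{..N}. F \<omega> k = p k} \<in> sets P"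
  by (intro sets.sets_Collect_finite_All F_eq_sets) auto

lemma T_countable: "countable T"
  unfolding tree_def by (rule countable_UN) (auto intro: countable_finite pn_fin)


lemma tele:
  assumes "q 0 = x0" "\<forall>k\<le>N. q k \<in> T" "\<forall>k<N. q (Suc k) \<in> pre (q k)"
  shows "c x0 * (\<Prod>k<N. wt (q k) (q (Suc k))) = c (q N)"
  using assms
proof (induction N)
  case 0 then show ?case by simp
next
  case (Suc N)
  then have IH: "c x0 * (\<Prod>k<N. wt (q k) (q (Suc k))) = c (q N)" by simp
  have qT: "q N \<in> T" and ch: "q (Suc N) \<in> pre (q N)" using Suc.prems by auto
  have "c x0 * (\<Prod>k<Suc N. wt (q k) (q (Suc k))) = (c x0 * (\<Prod>k<N. wt (q k) (q (Suc k)))) * wt (q N) (q (Suc N))"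
    by (simp only: prod.lessThan_Suc mult.assoc)
  also have "\<dots> = c (q N) * wt (q N) (q (Suc N))" by (simp only: IH)
  also have "\<dots> = c (q (Suc N))"
  proof (cases "c (q N) > 0")
    case True then show ?thesis by (simp add: wt_def)
  next
    case False
    then have "c (q N) = 0" using c_nn[OF qT] by simp
    moreover have "c (q (Suc N)) \<le> c (q N)" by (rule c_child_le[OF qT ch])
    moreover have "c (q (Suc N)) \<ge> 0" using c_nn child_T[OF qT ch] by blast
    ultimately show ?thesis by simp
  qed
  finally show ?case .
qed

context
  fixes x N assumes xN: "x \<in> pn N"
begin

definition q :: "nat \<Rightarrow> 'a" where "q k = (r ^^ (N - k)) x"

lemma q_pn: "k \<le> N \<Longrightarrow> q k \<in> pn k"
  using anc_pn[OF xN, of "N - k"] by (simp add: q_def)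

lemma q_T: "k \<le> N \<Longrightarrow> q k \<in> T" using q_pn T_iff by blast

lemma q_lev: "k \<le> N \<Longrightarrow> lev (q k) = k" using q_pn lev_eq by blast

lemma q_0: "q 0 = x0" using xN by (simp add: q_def preim_n_def)

lemma q_N: "q N = x" by (simp add: q_def)

lemma q_child: assumes "k < N" shows "q (Suc k) \<in> pre (q k)"
proof -
  have "q (Suc k) \<in> X" using q_pn[of "Suc k"] assms by (simp add: preim_n_def)
  moreover have "r (q (Suc k)) = q k"
  proof -
    have e: "N - k = Suc (N - Suc k)" using assms by simp
    have "r ((r ^^ (N - Suc k)) x) = (r ^^ Suc (N - Suc k)) x" by simp
    then show ?thesis unfolding q_def e[symmetric] .
  qed
  ultimately show ?thesis by (simp add: preim_def)
qed

lemma path_iff: assumes w: "\<omega> \<in> space P"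
  shows "(\<forall>k\<in>{..N}. F \<omega> k = q k) \<longleftrightarrow> (\<forall>k<N. \<omega> (q k) = q (Suc k))"
proof
  assume h: "\<forall>k\<in>{..N}. F \<omega> k = q k"
  show "\<forall>k<N. \<omega> (q k) = q (Suc k)"
  proof (intro allI impI)
    fix k assume "k < N"
    then have "F \<omega> k = q k" "F \<omega> (Suc k) = q (Suc k)" using h by auto
    then show "\<omega> (q k) = q (Suc k)" by (simp add: F_Suc)
  qed
next
  assume h: "\<forall>k<N. \<omega> (q k) = q (Suc k)"
  have "k \<le> N \<longrightarrow> F \<omega> k = q k" for k
  proof (induction k)
    case 0 then show ?case using q_0 by (simp add: F_def)
  next
    case (Suc k) then show ?case using h by (simp add: F_Suc)
  qed
  then show "\<forall>k\<in>{..N}. F \<omega> k = q k" by simp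
qed

lemma path_emb:
  "{\<omega> \<in> space P. \<forall>k\<in>{..N}. F \<omega> k = q k} =
     prod_emb T M (q ` {..<N}) (\<Pi>\<^sub>E j\<in>q ` {..<N}. {q (Suc (lev j))})"
proof (rule set_eqI)
  fix \<omega>
  have e1: "\<omega> \<in> prod_emb T M (q ` {..<N}) (\<Pi>\<^sub>E j\<in>q ` {..<N}. {q (Suc (lev j))}) \<longleftrightarrow>
     \<omega> \<in> space P \<and> (\<forall>j\<in>q ` {..<N}. \<omega> j \<in> {q (Suc (lev j))})"
    unfolding prod_emb_def P_def space_PiM vimage_def
    by (simp only: restrict_PiE_iff Int_iff mem_Collect_eq) blast
  have e2: "(\<forall>j\<in>q ` {..<N}. \<omega> j \<in> {q (Suc (lev j))}) \<longleftrightarrow> (\<forall>k<N. \<omega> (q k) = q (Suc k))"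
    using q_lev by auto
  show "\<omega> \<in> {\<omega> \<in> space P. \<forall>k\<in>{..N}. F \<omega> k = q k} \<longleftrightarrow>
     \<omega> \<in> prod_emb T M (q ` {..<N}) (\<Pi>\<^sub>E j\<in>q ` {..<N}. {q (Suc (lev j))})"
    unfolding e1 e2 using path_iff[of \<omega>] by blast
qed

lemma q_inj: "inj_on q {..<N}"
proof (rule inj_onI)
  fix a b assume "a \<in> {..<N}" "b \<in> {..<N}" "q a = q b"
  then show "a = b" using q_lev[of a] q_lev[of b] by (metis less_imp_le lessThan_iff)
qed

lemma path_measure:
  "emeasure P {\<omega> \<in> space P. \<forall>k\<in>{..N}. F \<omega> k = q k} = ennreal (\<Prod>k<N. wt (q k) (q (Suc k)))"
proof -
  have JT: "q ` {..<N} \<subseteq> T" using q_T by auto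
  have "emeasure P {\<omega> \<in> space P. \<forall>k\<in>{..N}. F \<omega> k = q k} =
        (\<Prod>j\<in>q ` {..<N}. emeasure (M j) {q (Suc (lev j))})"
    unfolding path_emb unfolding P_def
  proof (rule emeasure_PiM_emb)
    show "\<And>i. i \<in> T \<Longrightarrow> prob_space (M i)" by (rule M_prob)
    show "q ` {..<N} \<subseteq> T" by (rule JT)
    show "finite (q ` {..<N})" by simp
    fix j assume "j \<in> q ` {..<N}"
    then obtain k where k: "k < N" "j = q k" by auto
    then have "{q (Suc (lev j))} \<subseteq> pre j" using q_lev q_child by auto
    moreover have "j \<in> T" using JT k by auto
    ultimately show "{q (Suc (lev j))} \<in> sets (M j)" using sets_M by auto
  qed
  also have "\<dots> = (\<Prod>k<N. emeasure (M (q k)) {q (Suc (lev (q k)))})"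
    by (simp add: prod.reindex[OF q_inj])
  also have "\<dots> = (\<Prod>k<N. ennreal (wt (q k) (q (Suc k))))"
  proof (rule prod.cong[OF refl])
    fix k assume "k \<in> {..<N}"
    then have k: "k < N" by simp
    then have qT: "q k \<in> T" using q_T by simp
    have "{q (Suc k)} \<subseteq> pre (q k)" using q_child k by auto
    then show "emeasure (M (q k)) {q (Suc (lev (q k)))} = ennreal (wt (q k) (q (Suc k)))"
      using q_lev[of k] k pre_fin[OF T_X[OF qT]]
      by (simp add: M_T[OF qT] emeasure_point_measure_finite)
  qed
  also have "\<dots> = ennreal (\<Prod>k<N. wt (q k) (q (Suc k)))"
    by (rule prod_ennreal) (use wt_nn q_T q_child in auto)
  finally show ?thesis .
qed

lemma path_c: "c x0 * (\<Prod>k<N. wt (q k) (q (Suc k))) = c x"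
  using tele[of q N] q_0 q_T q_child q_N by auto

end

lemma F_borel: "F \<in> borel_measurable P"
proof (rule borel_measurableI)
  fix S :: "(nat \<Rightarrow> 'a) set" assume S: "open S"
  define H where "H = (\<lambda>(N::nat, p::'a list). {\<omega> \<in> space P. \<forall>k\<in>{..N}. F \<omega> k = p ! k})"
  define K where "K = {(N, p). p \<in> lists T \<and> H (N,p) \<subseteq> F -` S}"
  have eq: "F -` S \<inter> space P = \<Union> (H ` K)"
  proof (intro equalityI subsetI)
    fix \<omega> assume "\<omega> \<in> F -` S \<inter> space P"
    then have w: "\<omega> \<in> space P" "F \<omega> \<in> S" by auto
    have "openin (product_topology (\<lambda>i. euclidean) UNIV) S" using S by (simp add: open_fun_def)
    from product_topology_open_contains_basis[OF this w(2)]
    obtain U where U: "F \<omega> \<in> (\<Pi>\<^sub>E i\<in>UNIV. U i)" "finite {i. U i \<noteq> UNIV}" "(\<Pi>\<^sub>E i\<in>UNIV. U i) \<subseteq> S"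
      by auto
    define N where "N = Max (insert 0 {i. U i \<noteq> UNIV})"
    have N: "U i \<noteq> UNIV \<Longrightarrow> i \<le> N" for i using U(2) by (simp add: N_def)
    define p where "p = map (F \<omega>) [0..<Suc N]"
    have pnth: "k \<le> N \<Longrightarrow> p ! k = F \<omega> k" for k
      by (simp add: p_def nth_map_upt less_Suc_eq_le del: upt_Suc)
    have "H (N,p) \<subseteq> F -` S"
    proof
      fix \<omega>' assume "\<omega>' \<in> H (N,p)"
      then have h: "\<forall>k\<le>N. F \<omega>' k = F \<omega> k" using pnth by (auto simp: H_def)
      have "F \<omega>' i \<in> U i" for i
      proof (cases "U i = UNIV")
        case False
        then show ?thesis using h N U(1) by (auto simp: PiE_UNIV_domain)
      qed simp
      then have "F \<omega>' \<in> (\<Pi>\<^sub>E i\<in>UNIV. U i)" by (auto simp: PiE_UNIV_domain)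
      then show "\<omega>' \<in> F -` S" using U(3) by auto
    qed
    moreover have "p \<in> lists T"
    proof -
      have "\<forall>k. F \<omega> k \<in> T" using F_pn[OF w(1)] T_iff by blast
      then show ?thesis by (auto simp: p_def)
    qed
    moreover have "\<omega> \<in> H (N,p)" using w pnth by (auto simp: H_def)
    ultimately show "\<omega> \<in> \<Union> (H ` K)" by (intro UN_I[of "(N,p)"]) (auto simp: K_def)
  next
    fix \<omega> assume "\<omega> \<in> \<Union> (H ` K)" then show "\<omega> \<in> F -` S \<inter> space P" by (auto simp: K_def H_def)
  qed
  have "K \<subseteq> UNIV \<times> lists T" by (auto simp: K_def)
  moreover have "countable ((UNIV :: nat set) \<times> lists T)"
    by (rule countable_SIGMA) (auto intro: countable_lists T_countable countableI_type)
  ultimately have cK: "countable K" by (rule countable_subset)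
  have "\<And>z. H z \<in> sets P" unfolding H_def by (auto intro: H_sets)
  then show "F -` S \<inter> space P \<in> sets P" unfolding eq
    by (intro sets.countable_UN' cK) auto
qed

lemma F_meas_Omega: "F \<in> measurable P (restrict_space borel (Omega X r x0))"
  by (rule measurable_restrict_space2) (use F_Omega F_borel in auto)

lemma cyl_sets: "cyl X r x0 xs \<in> sets (restrict_space borel (Omega X r x0))"
proof -
  have e: "cyl X r x0 xs = Omega X r x0 \<inter> (\<Inter>k\<in>{..<length xs}. {z. z k = xs ! k})"
    by (auto simp: cyl_def)
  have "closed (\<Inter>k\<in>{..<length xs}. {z :: nat \<Rightarrow> 'a. z k = xs ! k})"
    by (intro closed_INT ballI closed_Collect_eq continuous_on_product_coordinates continuous_on_const)
  then show ?thesis unfolding e sets_restrict_space by (intro imageI borel_closed)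
qed

lemma F_cyl: assumes xN: "x \<in> pn N"
  shows "F -` cyl X r x0 (map (q x N) [0..<Suc N]) \<inter> space P =
         {\<omega> \<in> space P. \<forall>k\<in>{..N}. F \<omega> k = q x N k}"
proof -
  have "\<And>k. k \<le> N \<Longrightarrow> map (q x N) [0..<Suc N] ! k = q x N k"
    by (simp add: nth_map_upt less_Suc_eq_le del: upt_Suc)
  then show ?thesis using F_Omega by (auto simp: cyl_def less_Suc_eq_le)
qed

definition nu :: "(nat \<Rightarrow> 'a) measure" where
  "nu = density (distr P (restrict_space borel (Omega X r x0)) F) (\<lambda>_. ennreal (c x0))"

lemma sets_nu: "sets nu = sets (restrict_space borel (Omega X r x0))"
  by (simp add: nu_def)

lemma nu_cyl: assumes xT: "x \<in> T"
  shows "emeasure nu (cyl X r x0 (map (\<lambda>k. (r ^^ (lev x - k)) x) [0..<Suc (lev x)])) = ennreal (c x)"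
proof -
  have xN: "x \<in> pn (lev x)" using T_pn[OF xT] by simp
  have lst: "map (\<lambda>k. (r ^^ (lev x - k)) x) [0..<Suc (lev x)] = map (q x (lev x)) [0..<Suc (lev x)]"
    by (simp add: q_def[OF xN] del: upt_Suc)
  have x0T: "x0 \<in> T" using x0X T_iff by (auto simp: preim_n_def intro: exI[of _ 0])
  have "emeasure nu (cyl X r x0 (map (q x (lev x)) [0..<Suc (lev x)])) =
        ennreal (c x0) * emeasure P (F -` cyl X r x0 (map (q x (lev x)) [0..<Suc (lev x)]) \<inter> space P)"
    unfolding nu_def
    by (simp add: emeasure_density_const cyl_sets emeasure_distr F_meas_Omega)
  also have "\<dots> = ennreal (c x0) * ennreal (\<Prod>k<lev x. wt (q x (lev x) k) (q x (lev x) (Suc k)))"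
    by (simp del: upt_Suc add: F_cyl[OF xN] path_measure[OF xN])
  also have "\<dots> = ennreal (c x0 * (\<Prod>k<lev x. wt (q x (lev x) k) (q x (lev x) (Suc k))))"
  proof (rule ennreal_mult[symmetric])
    show "0 \<le> c x0" by (rule c_nn[OF x0T])
    show "0 \<le> (\<Prod>k<lev x. wt (q x (lev x) k) (q x (lev x) (Suc k)))"
    proof (rule prod_nonneg)
      fix k assume "k \<in> {..<lev x}"
      then have k: "k < lev x" by simp
      show "0 \<le> wt (q x (lev x) k) (q x (lev x) (Suc k))"
        using k by (intro wt_nn q_T[OF xN] q_child[OF xN]) auto
    qed
  qed
  also have "\<dots> = ennreal (c x)" by (simp add: path_c[OF xN])
  finally show ?thesis unfolding lst .
qed

lemma main_loc:
  "\<exists>\<nu> :: (nat \<Rightarrow> 'a) measure.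
           sets \<nu> = sets (restrict_space borel (Omega X r x0)) \<and>
           (\<forall>x\<in>tree X r x0.
              u x = (1 / (\<Prod>k<level r x0 x. Wfun X r m0 ((r ^^ k) x))) *
                    enn2real (emeasure \<nu> (cyl X r x0
                      (map (\<lambda>k. (r ^^ (level r x0 x - k)) x) [0..<Suc (level r x0 x)])))
              \<and> emeasure \<nu> (cyl X r x0
                      (map (\<lambda>k. (r ^^ (level r x0 x - k)) x) [0..<Suc (level r x0 x)])) < \<infinity>)"
proof (intro exI conjI ballI)
  show "sets nu = sets (restrict_space borel (Omega X r x0))" by (rule sets_nu)
next
  fix x assume xT: "x \<in> tree X r x0"
  show "emeasure nu (cyl X r x0 (map (\<lambda>k. (r ^^ (level r x0 x - k)) x) [0..<Suc (level r x0 x)])) < \<infinity>"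
    using nu_cyl[OF xT] by simp
  have pw: "PW x > 0" by (rule PW_pos[OF xT])
  show "u x = (1 / (\<Prod>k<level r x0 x. Wfun X r m0 ((r ^^ k) x))) *
          enn2real (emeasure nu (cyl X r x0 (map (\<lambda>k. (r ^^ (level r x0 x - k)) x) [0..<Suc (level r x0 x)])))"
    using nu_cyl[OF xT] c_nn[OF xT] pw unfolding PW_def[symmetric]
    by (simp add: c_def)
qed


end

theorem theorem4p5:
  fixes X :: "'a::metric_space set" and r :: "'a \<Rightarrow> 'a" and m0 :: "'a \<Rightarrow> complex"
    and x0 :: 'a and u :: "'a \<Rightarrow> real"
  assumes "standing X r m0"
    and "regular_point X r m0 x0"
    and "\<forall>x\<in>tree X r x0. u x \<ge> 0"
    and "p_harmonic X r m0 x0 u"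
  shows "\<exists>\<nu> :: (nat \<Rightarrow> 'a) measure.
           sets \<nu> = sets (restrict_space borel (Omega X r x0)) \<and>
           (\<forall>x\<in>tree X r x0.
              u x = (1 / (\<Prod>k<level r x0 x. Wfun X r m0 ((r ^^ k) x))) *
                    enn2real (emeasure \<nu> (cyl X r x0
                      (map (\<lambda>k. (r ^^ (level r x0 x - k)) x) [0..<Suc (level r x0 x)])))
              \<and> emeasure \<nu> (cyl X r x0
                      (map (\<lambda>k. (r ^^ (level r x0 x - k)) x) [0..<Suc (level r x0 x)])) < \<infinity>)"
proof -
  interpret thctx X r m0 x0 u using assms by unfold_locales
  show ?thesis by (rule main_loc)
qed

end
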